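(* Let $h>0$ and let $f_i, d_i, P_i, Q_i$ be real numbers with $P_i$ and $Q_i$ nonzero and of the same sign, i.e. $P_iQ_i>0$. For $k\in[0,1]$ define $$R(k) = f_i + d_i h k + \frac{P_i^2 k^2}{Q_i + (P_i - Q_i)k},\qquad C(k) = f_i + d_i h k + (2P_i - Q_i)k^2 + (Q_i - P_i)k^3,$$ and, for a weighting parameter $\alpha\in[0,1]$, $$F_\alpha(k) = \alpha R(k) + (1-\alpha) C(k),$$ regarded as a function of $x = x_i + kh$, so that $\partial^2 F_\alpha/\partial x^2 = h^{-2}\, d^2F_\alpha/dk^2$. Set $$M_i = \max\Big[2,\ \max\Big(\frac{Q_i}{P_i}, \frac{P_i}{Q_i}\Big)\Big],\qquad \alpha^* = \frac{M_i(M_i-2)}{M_i(M_i-2)+1}.$$ Then $\alpha^*\in[0,1)$, and for $\alpha\in[0,1]$ the interpolant $F_\alpha$ preserves the convexity of the data on the cell, i.e. $$\frac{\partial^2 F_\alpha(k)}{\partial x^2}\le 0 \text{ for all } k\in[0,1] \text{ when } P_i<0,\ Q_i<0,\qquad \frac{\partial^2 F_\alpha(k)}{\partial x^2}\ge 0 \text{ for all } k\in[0,1] \text{ when } P_i>0,\ Q_i>0,$$ if and only if $\alpha\ge\alpha^*$. In particular, $\alpha^*$ is the smallest such weighting parameter, and $\alpha^*=0$ (the purely cubic interpolant is convexity preserving) whenever $1/2\le Q_i/P_i\le 2$.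
   Context: This concerns a semi-Lagrangian (CIP-type) scheme for the 1D advection equation $f_t + u f_x = 0$ on a uniform grid of spacing $h$. On a cell $[x_i,x_{i+1}]$, $f_i, f_{i+1}$ are the values of the quantity and $d_i, d_{i+1}$ its first spatial derivatives at the grid points; $S_i=(f_{i+1}-f_i)/h$, $P_i=(S_i-d_i)h$, $Q_i=(d_{i+1}-S_i)h$. The data are convex on the cell when $d_i>S_i>d_{i+1}$ (i.e. $P_i<0,\ Q_i<0$) and concave when $d_i<S_i<d_{i+1}$ (i.e. $P_i>0,\ Q_i>0$). $k=-u_i\Delta t/h\in[0,1]$ is the local Courant number. $R$ is the rational (cubic-rational) interpolant and $C$ is the Hermite cubic interpolant; both match $f_i, f_{i+1}, d_i, d_{i+1}$ at the cell ends. The denominator $Q_i+(P_i-Q_i)k$ of $R$ does not vanish for $k\in[0,1]$ when $P_iQ_i>0$. *)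

theory Defs
  imports "HOL-Analysis.Analysis"
begin

definition cipR :: "real \<Rightarrow> real \<Rightarrow> real \<Rightarrow> real \<Rightarrow> real \<Rightarrow> real \<Rightarrow> real" where
  "cipR h f d P Q k = f + d * h * k + P^2 * k^2 / (Q + (P - Q) * k)"

definition cipC :: "real \<Rightarrow> real \<Rightarrow> real \<Rightarrow> real \<Rightarrow> real \<Rightarrow> real \<Rightarrow> real" where
  "cipC h f d P Q k = f + d * h * k + (2 * P - Q) * k^2 + (Q - P) * k^3"

definition cipF :: "real \<Rightarrow> real \<Rightarrow> real \<Rightarrow> real \<Rightarrow> real \<Rightarrow> real \<Rightarrow> real \<Rightarrow> real" where
  "cipF \<alpha> h f d P Q k = \<alpha> * cipR h f d P Q k + (1 - \<alpha>) * cipC h f d P Q k"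

text \<open>Second derivative with respect to x = x_i + k h, i.e. h^(-2) d^2 F / dk^2.\<close>
definition cipF_xx :: "real \<Rightarrow> real \<Rightarrow> real \<Rightarrow> real \<Rightarrow> real \<Rightarrow> real \<Rightarrow> real \<Rightarrow> real" where
  "cipF_xx \<alpha> h f d P Q k = (deriv ^^ 2) (cipF \<alpha> h f d P Q) k / h^2"

definition convexity_preserving :: "real \<Rightarrow> real \<Rightarrow> real \<Rightarrow> real \<Rightarrow> real \<Rightarrow> real \<Rightarrow> bool" where
  "convexity_preserving \<alpha> h f d P Q \<longleftrightarrow>
     ((P < 0 \<and> Q < 0) \<longrightarrow> (\<forall>k\<in>{0..1}. cipF_xx \<alpha> h f d P Q k \<le> 0)) \<and>
     ((P > 0 \<and> Q > 0) \<longrightarrow> (\<forall>k\<in>{0..1}. cipF_xx \<alpha> h f d P Q k \<ge> 0))"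

definition cipM :: "real \<Rightarrow> real \<Rightarrow> real" where
  "cipM P Q = max 2 (max (Q / P) (P / Q))"

definition alpha_star :: "real \<Rightarrow> real \<Rightarrow> real" where
  "alpha_star P Q = cipM P Q * (cipM P Q - 2) / (cipM P Q * (cipM P Q - 2) + 1)"

end

theory Submission
  imports Defs
begin

definition G :: "real \<Rightarrow> real \<Rightarrow> real \<Rightarrow> real" where
  "G P Q k = P^2 * k^2 / (Q + (P - Q) * k)"

definition G1 :: "real \<Rightarrow> real \<Rightarrow> real \<Rightarrow> real" where
  "G1 P Q k = P^2 * ((2 * Q * k + (P - Q) * k^2) / (Q + (P - Q) * k)^2)"

definition F1 :: "real \<Rightarrow> real \<Rightarrow> real \<Rightarrow> real \<Rightarrow> real \<Rightarrow> real \<Rightarrow> real" where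
  "F1 \<alpha> h d P Q k = \<alpha> * (d * h + G1 P Q k)
     + (1 - \<alpha>) * (d * h + 2 * (2 * P - Q) * k + 3 * (Q - P) * k^2)"

definition F2 :: "real \<Rightarrow> real \<Rightarrow> real \<Rightarrow> real \<Rightarrow> real" where
  "F2 \<alpha> P Q k = \<alpha> * (2 * P^2 * Q^2 / (Q + (P - Q) * k)^3) + (1 - \<alpha>) * (2 * (2 * P - Q) + 6 * (Q - P) * k)"

lemma dG: assumes "Q + (P - Q) * k \<noteq> 0"
  shows "(G P Q has_real_derivative G1 P Q k) (at k)"
proof -
  have "((\<lambda>k. P^2 * k^2 / (Q + (P - Q) * k)) has_real_derivative G1 P Q k) (at k)"
    unfolding G1_def
    apply (rule derivative_eq_intros refl)+
    using assms apply simp_all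
    apply (simp add: power2_eq_square algebra_simps)
    done
  then show ?thesis unfolding G_def by simp
qed

lemma dG1: assumes "Q + (P - Q) * k \<noteq> 0"
  shows "(G1 P Q has_real_derivative 2 * P^2 * Q^2 / (Q + (P - Q) * k)^3) (at k)"
proof -
  have "((\<lambda>k. P^2 * ((2 * Q * k + (P - Q) * k^2) / (Q + (P - Q) * k)^2)) has_real_derivative
     (2 * P^2 * Q^2 / (Q + (P - Q) * k)^3)) (at k)"
  apply (rule derivative_eq_intros refl)+
  using assms apply simp_all
  proof -
    assume a: "Q + (P - Q) * k \<noteq> 0"
    define D where "D = Q + (P - Q) * k"
    have e: "(2 * Q + 2 * k * (P - Q)) * D\<^sup>2 -
        (2 * Q * k + (P - Q) * k\<^sup>2) * (2 * ((P - Q) * D)) = 2 * Q^2 * D"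
      unfolding D_def by algebra
    have "D \<noteq> 0" using a D_def by simp
    then have "2 * Q^2 * D / D^4 * P^2 = 2 * P^2 * Q^2 / D^3"
      by (simp add: field_simps eval_nat_numeral)
    then show "((2 * Q + 2 * k * (P - Q)) * (Q + (P - Q) * k)\<^sup>2 -
        (2 * Q * k + (P - Q) * k\<^sup>2) * (2 * ((P - Q) * (Q + (P - Q) * k)))) /
       (Q + (P - Q) * k) ^ 4 * P\<^sup>2 = 2 * P\<^sup>2 * Q\<^sup>2 / (Q + (P - Q) * k) ^ 3"
      using e unfolding D_def by simp
  qed
  then show ?thesis unfolding G1_def by simp
qed

lemma dF: assumes "Q + (P - Q) * k \<noteq> 0"
  shows "(cipF \<alpha> h f d P Q has_real_derivative F1 \<alpha> h d P Q k) (at k)"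
proof -
  have "((\<lambda>k. \<alpha> * (f + d * h * k + G P Q k) + (1 - \<alpha>) * (f + d * h * k + (2 * P - Q) * k^2 + (Q - P) * k^3))
     has_real_derivative F1 \<alpha> h d P Q k) (at k)"
    unfolding F1_def
    apply (rule derivative_eq_intros dG[OF assms] refl)+
    by (simp add: algebra_simps)
  then show ?thesis unfolding cipF_def cipR_def cipC_def G_def by simp
qed

lemma dF1: assumes "Q + (P - Q) * k \<noteq> 0"
  shows "(F1 \<alpha> h d P Q has_real_derivative F2 \<alpha> P Q k) (at k)"
proof -
  have "((\<lambda>k. \<alpha> * (d * h + G1 P Q k)
     + (1 - \<alpha>) * (d * h + 2 * (2 * P - Q) * k + 3 * (Q - P) * k^2))
     has_real_derivative F2 \<alpha> P Q k) (at k)"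
    unfolding F2_def
    apply (rule derivative_eq_intros dG1[OF assms] refl)+
    by (simp add: algebra_simps)
  then show ?thesis unfolding F1_def by simp
qed

lemma d2F: assumes "Q + (P - Q) * k \<noteq> 0"
  shows "cipF_xx \<alpha> h f d P Q k = F2 \<alpha> P Q k / h^2"
proof -
  let ?S = "{k. Q + (P - Q) * k \<noteq> 0}"
  have op: "open ?S" by (intro open_Collect_neq continuous_intros)
  have "(deriv (cipF \<alpha> h f d P Q) has_real_derivative F2 \<alpha> P Q k) (at k)"
  proof (rule has_field_derivative_transform_within_open[OF dF1[OF assms] op])
    show "k \<in> ?S" using assms by simp
    fix x assume "x \<in> ?S"
    then have "Q + (P - Q) * x \<noteq> 0" by simp
    from DERIV_imp_deriv[OF dF[OF this]]
    show "F1 \<alpha> h d P Q x = deriv (cipF \<alpha> h f d P Q) x" by simp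
  qed
  then have "deriv (deriv (cipF \<alpha> h f d P Q)) k = F2 \<alpha> P Q k" by (rule DERIV_imp_deriv)
  then show ?thesis unfolding cipF_xx_def by (simp add: numeral_2_eq_2)
qed


lemma F2_neg: "F2 \<alpha> (-P) (-Q) k = - F2 \<alpha> P Q k"
proof -
  define D where "D = Q + (P - Q) * k"
  have e1: "-Q + (-P - -Q) * k = - D" unfolding D_def by (simp add: algebra_simps)
  show ?thesis unfolding F2_def e1 D_def[symmetric] by (simp add: algebra_simps)
qed

lemma F2_swap: "F2 \<alpha> P Q k = F2 \<alpha> Q P (1 - k)"
proof -
  have "P + (Q - P) * (1 - k) = Q + (P - Q) * k" by (simp add: algebra_simps)
  then show ?thesis unfolding F2_def by (simp add: algebra_simps)
qed

lemma astar_neg: "alpha_star (-P) (-Q) = alpha_star P Q"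
  unfolding alpha_star_def cipM_def by simp

lemma astar_swap: "alpha_star Q P = alpha_star P Q"
  unfolding alpha_star_def cipM_def by (simp add: max.commute)

lemma D_pos: fixes P Q k :: real assumes "P > 0" "Q > 0" "0 \<le> k" "k \<le> 1"
  shows "Q + (P - Q) * k > 0"
proof -
  have "Q + (P - Q) * k = (1 - k) * Q + k * P" by algebra
  moreover have "(1 - k) * Q + k * P > 0"
  proof (cases "k = 0")
    case True then show ?thesis using assms by simp
  next
    case False
    then have "k * P > 0" using assms by simp
    moreover have "(1 - k) * Q \<ge> 0" using assms by simp
    ultimately show ?thesis by linarith
  qed
  ultimately show ?thesis by simp
qed

lemma F2_mono0: assumes "0 < P" "P \<le> Q" "0 \<le> k" "k \<le> 1" "0 \<le> \<alpha>" "\<alpha> \<le> 1"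
  shows "F2 \<alpha> P Q 0 \<le> F2 \<alpha> P Q k"
proof -
  define D where "D = Q + (P - Q) * k"
  have Dpos: "D > 0" using D_pos[of P Q k] assms unfolding D_def by simp
  have DQ: "D \<le> Q" unfolding D_def using assms by (simp add: mult_nonpos_nonneg)
  have "D^3 \<le> Q^3" using DQ Dpos by (intro power_mono) auto
  then have r: "2 * P^2 * Q^2 / Q^3 \<le> 2 * P^2 * Q^2 / D^3"
    using Dpos assms by (intro divide_left_mono) auto
  have c: "2 * (2 * P - Q) + 6 * (Q - P) * 0 \<le> 2 * (2 * P - Q) + 6 * (Q - P) * k"
    using assms by simp
  have "\<alpha> * (2 * P^2 * Q^2 / Q^3) \<le> \<alpha> * (2 * P^2 * Q^2 / D^3)"
    using r assms by (intro mult_left_mono) auto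
  moreover have "(1 - \<alpha>) * (2 * (2 * P - Q) + 6 * (Q - P) * 0) \<le> (1 - \<alpha>) * (2 * (2 * P - Q) + 6 * (Q - P) * k)"
    using c assms by (intro mult_left_mono) auto
  ultimately show ?thesis unfolding F2_def D_def by simp
qed

lemma F2_at0: assumes "0 < P" "P \<le> Q" "0 \<le> \<alpha>" "\<alpha> \<le> 1"
  shows "0 \<le> F2 \<alpha> P Q 0 \<longleftrightarrow> alpha_star P Q \<le> \<alpha>"
proof -
  define r where "r = Q / P"
  have Qr: "Q = r * P" using assms unfolding r_def by simp
  have r1: "r \<ge> 1" using assms unfolding r_def by simp
  have PQ: "P / Q \<le> 1" using assms by simp
  have "max (Q / P) (P / Q) = r" using PQ r1 unfolding r_def by simp
  then have M: "cipM P Q = max 2 r" unfolding cipM_def by simp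
  have "F2 \<alpha> P Q 0 = 2 * \<alpha> * P^2 / Q + (1 - \<alpha>) * (4 * P - 2 * Q)"
    unfolding F2_def using assms by (simp add: power2_eq_square power3_eq_cube)
  also have "\<dots> = (2 * P / r) * (\<alpha> - (1 - \<alpha>) * (r * (r - 2)))"
    unfolding Qr using assms r1 by (simp add: field_simps power2_eq_square)
  finally have F: "F2 \<alpha> P Q 0 = (2 * P / r) * (\<alpha> - (1 - \<alpha>) * (r * (r - 2)))" .
  have pos: "2 * P / r > 0" using assms r1 by simp
  have "0 \<le> F2 \<alpha> P Q 0 \<longleftrightarrow> (2 * P / r) * 0 \<le> (2 * P / r) * (\<alpha> - (1 - \<alpha>) * (r * (r - 2)))"
    unfolding F by simp
  also have "\<dots> \<longleftrightarrow> 0 \<le> \<alpha> - (1 - \<alpha>) * (r * (r - 2))"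
    by (rule mult_le_cancel_left_pos[OF pos])
  also have "\<dots> \<longleftrightarrow> r * (r - 2) \<le> \<alpha> * (r * (r - 2) + 1)" by (simp add: algebra_simps)
  also have "\<dots> \<longleftrightarrow> alpha_star P Q \<le> \<alpha>"
  proof (cases "r \<le> 2")
    case True
    then have "alpha_star P Q = 0" unfolding alpha_star_def M by (simp add: max_def)
    moreover have "r * (r - 2) \<le> 0" using True r1 by (simp add: mult_nonneg_nonpos)
    moreover have "r * (r - 2) + 1 = (r - 1)^2" by algebra
    then have "r * (r - 2) + 1 \<ge> 0" by simp
    then have "\<alpha> * (r * (r - 2) + 1) \<ge> 0" using assms by simp
    ultimately show ?thesis using assms by linarith
  next
    case False
    then have "alpha_star P Q = r * (r - 2) / (r * (r - 2) + 1)" unfolding alpha_star_def M by (simp add: max_def)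
    moreover have "r * (r - 2) + 1 > 0" using False by (simp add: add_pos_pos)
    ultimately show ?thesis by (simp add: divide_le_eq mult.commute)
  qed
  finally show ?thesis .
qed


lemma core: assumes "0 < P" "P \<le> Q" "0 \<le> \<alpha>" "\<alpha> \<le> 1"
  shows "(\<forall>k\<in>{0..1}. 0 \<le> F2 \<alpha> P Q k) \<longleftrightarrow> alpha_star P Q \<le> \<alpha>"
proof
  assume "\<forall>k\<in>{0..1}. 0 \<le> F2 \<alpha> P Q k"
  then have "0 \<le> F2 \<alpha> P Q 0" by simp
  then show "alpha_star P Q \<le> \<alpha>" using F2_at0 assms by blast
next
  assume "alpha_star P Q \<le> \<alpha>"
  then have "0 \<le> F2 \<alpha> P Q 0" using F2_at0 assms by blast
  then show "\<forall>k\<in>{0..1}. 0 \<le> F2 \<alpha> P Q k"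
    using F2_mono0 assms by (meson atLeastAtMost_iff order_trans)
qed

lemma poscase: assumes "0 < P" "0 < Q" "0 \<le> \<alpha>" "\<alpha> \<le> 1"
  shows "(\<forall>k\<in>{0..1}. 0 \<le> F2 \<alpha> P Q k) \<longleftrightarrow> alpha_star P Q \<le> \<alpha>"
proof (cases "P \<le> Q")
  case True then show ?thesis using core assms by blast
next
  case False
  have c: "(\<forall>k\<in>{0..1}. 0 \<le> F2 \<alpha> Q P k) \<longleftrightarrow> alpha_star Q P \<le> \<alpha>"
    using core[of Q P \<alpha>] False assms by simp
  have "(\<forall>k\<in>{0..1}. 0 \<le> F2 \<alpha> P Q k) \<longleftrightarrow> (\<forall>k\<in>{0..1}. 0 \<le> F2 \<alpha> Q P k)"
  proof
    assume H: "\<forall>k\<in>{0..1}. 0 \<le> F2 \<alpha> P Q k"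
    show "\<forall>k\<in>{0..1}. 0 \<le> F2 \<alpha> Q P k"
    proof
      fix k :: real assume "k \<in> {0..1}"
      then have "1 - k \<in> {0..1}" by simp
      then have "0 \<le> F2 \<alpha> P Q (1 - k)" using H by blast
      then show "0 \<le> F2 \<alpha> Q P k" using F2_swap[of \<alpha> P Q "1 - k"] by simp
    qed
  next
    assume H: "\<forall>k\<in>{0..1}. 0 \<le> F2 \<alpha> Q P k"
    show "\<forall>k\<in>{0..1}. 0 \<le> F2 \<alpha> P Q k"
    proof
      fix k :: real assume "k \<in> {0..1}"
      then have "1 - k \<in> {0..1}" by simp
      then have "0 \<le> F2 \<alpha> Q P (1 - k)" using H by blast
      then show "0 \<le> F2 \<alpha> P Q k" using F2_swap[of \<alpha> P Q k] by simp
    qed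
  qed
  then show ?thesis using c astar_swap by simp
qed

lemma Dnz: fixes P Q k :: real assumes "P * Q > 0" "0 \<le> k" "k \<le> 1"
  shows "Q + (P - Q) * k \<noteq> 0"
proof -
  have "(P > 0 \<and> Q > 0) \<or> (P < 0 \<and> Q < 0)" using assms(1) by (simp add: zero_less_mult_iff)
  then show ?thesis
  proof
    assume "P > 0 \<and> Q > 0" then show ?thesis using D_pos[of P Q k] assms by simp
  next
    assume "P < 0 \<and> Q < 0"
    then have "-Q + (-P - -Q) * k > 0" using D_pos[of "-P" "-Q" k] assms by simp
    then show ?thesis by (simp add: algebra_simps)
  qed
qed

theorem mainTheorem1:
  fixes h f d P Q :: real
  assumes "h > 0" and "P * Q > 0"
  shows "0 \<le> alpha_star P Q \<and> alpha_star P Q < 1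
    \<and> (\<forall>\<alpha>\<in>{0..1}. convexity_preserving \<alpha> h f d P Q \<longleftrightarrow> alpha_star P Q \<le> \<alpha>)
    \<and> (1/2 \<le> Q / P \<and> Q / P \<le> 2 \<longrightarrow> alpha_star P Q = 0)"
proof (intro conjI)
  define M where "M = cipM P Q"
  have M2: "M \<ge> 2" unfolding M_def cipM_def by simp
  have m0: "M * (M - 2) \<ge> 0" using M2 by simp
  have as: "alpha_star P Q = M * (M - 2) / (M * (M - 2) + 1)" unfolding alpha_star_def M_def ..
  show "0 \<le> alpha_star P Q" unfolding as using m0 by simp
  show "alpha_star P Q < 1" unfolding as using m0 by simp
  show "1/2 \<le> Q / P \<and> Q / P \<le> 2 \<longrightarrow> alpha_star P Q = 0"
  proof
    assume H: "1/2 \<le> Q / P \<and> Q / P \<le> 2"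
    have P0: "P \<noteq> 0" using assms(2) by (metis mult_zero_left less_irrefl)
    have Q0: "Q \<noteq> 0" using assms(2) by (metis mult_zero_right less_irrefl)
    have inv: "P / Q = 1 / (Q / P)" using P0 Q0 by simp
    have t2: "\<And>t::real. 1/2 \<le> t \<Longrightarrow> 1 / t \<le> 2"
    proof -
      fix t :: real assume "1/2 \<le> t"
      then have "t > 0" "1 \<le> 2 * t" by linarith+
      then show "1 / t \<le> 2" by (simp add: divide_le_eq)
    qed
    have pq2: "P / Q \<le> 2" unfolding inv by (rule t2) (use H in blast)
    have mx: "max (Q / P) (P / Q) \<le> 2" by (rule max.boundedI[OF conjunct2[OF H] pq2])
    have "M = 2" unfolding M_def cipM_def by (rule max_absorb1[OF mx])
    then show "alpha_star P Q = 0" unfolding as by simp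
  qed
  show "\<forall>\<alpha>\<in>{0..1}. convexity_preserving \<alpha> h f d P Q \<longleftrightarrow> alpha_star P Q \<le> \<alpha>"
  proof
    fix \<alpha> :: real assume a: "\<alpha> \<in> {0..1}"
    have xx: "cipF_xx \<alpha> h f d P Q k = F2 \<alpha> P Q k / h^2" if "k \<in> {0..1}" for k
    proof -
      have "Q + (P - Q) * k \<noteq> 0" using that by (intro Dnz[OF assms(2)]) auto
      then show ?thesis by (rule d2F)
    qed
    have h2: "h^2 > 0" using assms by simp
    have sgn1: "\<And>k. k \<in> {0..1} \<Longrightarrow> (cipF_xx \<alpha> h f d P Q k \<le> 0 \<longleftrightarrow> F2 \<alpha> P Q k \<le> 0)"
      using xx h2 by (simp add: divide_le_0_iff)
    have sgn2: "\<And>k. k \<in> {0..1} \<Longrightarrow> (cipF_xx \<alpha> h f d P Q k \<ge> 0 \<longleftrightarrow> F2 \<alpha> P Q k \<ge> 0)"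
      using xx h2 by (simp add: zero_le_divide_iff)
    have "(P > 0 \<and> Q > 0) \<or> (P < 0 \<and> Q < 0)" using assms(2) by (simp add: zero_less_mult_iff)
    then show "convexity_preserving \<alpha> h f d P Q \<longleftrightarrow> alpha_star P Q \<le> \<alpha>"
    proof
      assume pq: "P > 0 \<and> Q > 0"
      then have "convexity_preserving \<alpha> h f d P Q \<longleftrightarrow> (\<forall>k\<in>{0..1}. cipF_xx \<alpha> h f d P Q k \<ge> 0)"
        unfolding convexity_preserving_def by simp
      also have "\<dots> \<longleftrightarrow> (\<forall>k\<in>{0..1}. 0 \<le> F2 \<alpha> P Q k)"
        by (rule ball_cong[OF refl]) (rule sgn2)
      finally have "convexity_preserving \<alpha> h f d P Q \<longleftrightarrow> (\<forall>k\<in>{0..1}. 0 \<le> F2 \<alpha> P Q k)" .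
      then show ?thesis using poscase[of P Q \<alpha>] pq a by simp
    next
      assume pq: "P < 0 \<and> Q < 0"
      then have "convexity_preserving \<alpha> h f d P Q \<longleftrightarrow> (\<forall>k\<in>{0..1}. cipF_xx \<alpha> h f d P Q k \<le> 0)"
        unfolding convexity_preserving_def by simp
      also have "\<dots> \<longleftrightarrow> (\<forall>k\<in>{0..1}. F2 \<alpha> P Q k \<le> 0)"
        by (rule ball_cong[OF refl]) (rule sgn1)
      also have "\<dots> \<longleftrightarrow> (\<forall>k\<in>{0..1}. 0 \<le> F2 \<alpha> (-P) (-Q) k)" using F2_neg by simp
      also have "\<dots> \<longleftrightarrow> alpha_star (-P) (-Q) \<le> \<alpha>" using poscase[of "-P" "-Q" \<alpha>] pq a by simp
      finally show ?thesis using astar_neg by simp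
    qed
  qed
qed

end
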